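(* Let $(\mathfrak g,\mathfrak g^*,E)$ be an ENL bialgebra, let $\mathfrak d=\mathfrak g\bowtie\mathfrak g^*$ be its Drinfel'd double and $\mathfrak d^*_r$ the dual Lie algebra defined below. Then $(\mathfrak d,\mathfrak d^*_r,\mathfrak E)$ is an ENL bialgebra, where $\mathfrak E:\mathfrak g\oplus\mathfrak g^*\to\mathfrak g\oplus\mathfrak g^*$, $\mathfrak E(x+\xi)=Ex+E^*\xi$ (with dual map $\mathfrak E^*(\xi+x)=E^*\xi+Ex$ on $\mathfrak d^*\cong\mathfrak g^*\oplus\mathfrak g$).
   Context: Vector spaces are finite-dimensional over an algebraically closed field of characteristic zero. An ENL algebra is a Lie algebra with linear $E$ satisfying $E[x,y]=[x,Ey]$ for all $x,y$. A Lie bialgebra $(\mathfrak g,\mathfrak g^* )$ consists of Lie brackets on $\mathfrak g$ and $\mathfrak g^*$ such that the map $\Delta:\mathfrak g\to\mathfrak g\otimes\mathfrak g$ dual to $[\cdot,\cdot]_{\mathfrak g^*}$ satisfies $\Delta([x,y])=(\mathrm{ad}_x\otimes\mathrm{Id}+\mathrm{Id}\otimes\mathrm{ad}_x)\Delta(y)-(\mathrm{ad}_y\otimes\mathrm{Id}+\mathrm{Id}\otimes\mathrm{ad}_y)\Delta(x)$. An ENL bialgebra $(\mathfrak g,\mathfrak g^*,E)$ is a Lie bialgebra such that $(\mathfrak g,E)$ and $(\mathfrak g^*,E^* )$ are ENL algebras ($E^*$ the dual map). The Drinfel'd double $\mathfrak d=\mathfrak g\bowtie\mathfrak g^*$ is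 $\mathfrak g\oplus\mathfrak g^*$ with bracket $[x+\xi,y+\eta]=([x,y]_{\mathfrak g}+\mathfrak{ad}^*_\xi y-\mathfrak{ad}^*_\eta x)+([\xi,\eta]_{\mathfrak g^*}+\mathrm{ad}^*_x\eta-\mathrm{ad}^*_y\xi)$, where $\langle\mathrm{ad}^*_x\xi,y\rangle=-\langle\xi,[x,y]_{\mathfrak g}\rangle$ and $\langle\mathfrak{ad}^*_\xi x,\eta\rangle=-\langle x,[\xi,\eta]_{\mathfrak g^*}\rangle$. With $r=\sum_i e_i\otimes\xi_i$ for dual bases, $\mathfrak d^*_r$ is $\mathfrak d^*\cong\mathfrak g^*\oplus\mathfrak g$ with bracket $[\xi+x,\eta+y]_r=(-[\xi,\eta]_{\mathfrak g^*},[x,y]_{\mathfrak g})$; it is known that $(\mathfrak d,\mathfrak d^*_r)$ is a (quasi-triangular) Lie bialgebra. The claim thus means $\mathfrak E$ is equivariant on $\mathfrak d$ and $\mathfrak E^*$ is equivariant on $\mathfrak d^*_r$. *)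

theory Defs
  imports Main "HOL-Computational_Algebra.Polynomial"
begin

text \<open>Finite-dimensional vector spaces are modelled in coordinates: a space of
dimension card 'n is the type 'n => 'k with 'n a finite index type.
The dual space is modelled by the same type, with the canonical pairing.\<close>

definition alg_closed :: "'k::field itself \<Rightarrow> bool" where
  "alg_closed _ \<longleftrightarrow> (\<forall>p :: 'k poly. 0 < degree p \<longrightarrow> (\<exists>x. poly p x = 0))"

definition vzero :: "'n \<Rightarrow> 'k::field" where "vzero = (\<lambda>_. 0)"
definition vadd :: "('n \<Rightarrow> 'k::field) \<Rightarrow> ('n \<Rightarrow> 'k) \<Rightarrow> ('n \<Rightarrow> 'k)" where
  "vadd x y = (\<lambda>i. x i + y i)"
definition vsub :: "('n \<Rightarrow> 'k::field) \<Rightarrow> ('n \<Rightarrow> 'k) \<Rightarrow> ('n \<Rightarrow> 'k)" where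
  "vsub x y = (\<lambda>i. x i - y i)"
definition vscale :: "'k::field \<Rightarrow> ('n \<Rightarrow> 'k) \<Rightarrow> ('n \<Rightarrow> 'k)" where
  "vscale c x = (\<lambda>i. c * x i)"

definition delta :: "'n \<Rightarrow> 'n \<Rightarrow> 'k::field" where
  "delta j = (\<lambda>i. if i = j then 1 else 0)"

definition pair :: "('n::finite \<Rightarrow> 'k::field) \<Rightarrow> ('n \<Rightarrow> 'k) \<Rightarrow> 'k" where
  "pair f x = (\<Sum>i\<in>UNIV. f i * x i)"

definition linear_map :: "(('n \<Rightarrow> 'k::field) \<Rightarrow> ('m \<Rightarrow> 'k)) \<Rightarrow> bool" where
  "linear_map f \<longleftrightarrow> (\<forall>x y. f (vadd x y) = vadd (f x) (f y)) \<and> (\<forall>c x. f (vscale c x) = vscale c (f x))"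

definition bilinear_map :: "(('n \<Rightarrow> 'k::field) \<Rightarrow> ('n \<Rightarrow> 'k) \<Rightarrow> ('n \<Rightarrow> 'k)) \<Rightarrow> bool" where
  "bilinear_map b \<longleftrightarrow> (\<forall>x. linear_map (b x)) \<and> (\<forall>y. linear_map (\<lambda>x. b x y))"

definition lie_algebra :: "(('n \<Rightarrow> 'k::field) \<Rightarrow> ('n \<Rightarrow> 'k) \<Rightarrow> ('n \<Rightarrow> 'k)) \<Rightarrow> bool" where
  "lie_algebra b \<longleftrightarrow> bilinear_map b \<and> (\<forall>x. b x x = vzero) \<and>
     (\<forall>x y z. vadd (vadd (b x (b y z)) (b y (b z x))) (b z (b x y)) = vzero)"

text \<open>Dual (transpose) map: pair (adj E xi) x = pair xi (E x).\<close>
definition adj :: "(('n::finite \<Rightarrow> 'k::field) \<Rightarrow> ('n \<Rightarrow> 'k)) \<Rightarrow> ('n \<Rightarrow> 'k) \<Rightarrow> ('n \<Rightarrow> 'k)" where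
  "adj E xi = (\<lambda>j. pair xi (E (delta j)))"

definition ENL_algebra :: "(('n \<Rightarrow> 'k::field) \<Rightarrow> ('n \<Rightarrow> 'k) \<Rightarrow> ('n \<Rightarrow> 'k)) \<Rightarrow> (('n \<Rightarrow> 'k) \<Rightarrow> ('n \<Rightarrow> 'k)) \<Rightarrow> bool" where
  "ENL_algebra b E \<longleftrightarrow> lie_algebra b \<and> linear_map E \<and> (\<forall>x y. E (b x y) = b x (E y))"

text \<open>Cobracket Delta : g -> g \<otimes> g dual to the bracket bs on g*; tensors g \<otimes> g are
  coordinate functions on 'n \<times> 'n.\<close>
definition cobracket :: "(('n::finite \<Rightarrow> 'k::field) \<Rightarrow> ('n \<Rightarrow> 'k) \<Rightarrow> ('n \<Rightarrow> 'k)) \<Rightarrow> ('n \<Rightarrow> 'k) \<Rightarrow> ('n \<times> 'n \<Rightarrow> 'k)" where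
  "cobracket bs x = (\<lambda>(i, j). pair (bs (delta i) (delta j)) x)"

definition ad_tensor1 :: "(('n::finite \<Rightarrow> 'k::field) \<Rightarrow> ('n \<Rightarrow> 'k) \<Rightarrow> ('n \<Rightarrow> 'k)) \<Rightarrow> ('n \<Rightarrow> 'k) \<Rightarrow> ('n \<times> 'n \<Rightarrow> 'k) \<Rightarrow> ('n \<times> 'n \<Rightarrow> 'k)" where
  "ad_tensor1 b x T = (\<lambda>(i, j). \<Sum>k\<in>UNIV. b x (delta k) i * T (k, j))"
definition ad_tensor2 :: "(('n::finite \<Rightarrow> 'k::field) \<Rightarrow> ('n \<Rightarrow> 'k) \<Rightarrow> ('n \<Rightarrow> 'k)) \<Rightarrow> ('n \<Rightarrow> 'k) \<Rightarrow> ('n \<times> 'n \<Rightarrow> 'k) \<Rightarrow> ('n \<times> 'n \<Rightarrow> 'k)" where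
  "ad_tensor2 b x T = (\<lambda>(i, j). \<Sum>k\<in>UNIV. b x (delta k) j * T (i, k))"

definition lie_bialgebra :: "(('n::finite \<Rightarrow> 'k::field) \<Rightarrow> ('n \<Rightarrow> 'k) \<Rightarrow> ('n \<Rightarrow> 'k)) \<Rightarrow> (('n \<Rightarrow> 'k) \<Rightarrow> ('n \<Rightarrow> 'k) \<Rightarrow> ('n \<Rightarrow> 'k)) \<Rightarrow> bool" where
  "lie_bialgebra b bs \<longleftrightarrow> lie_algebra b \<and> lie_algebra bs \<and>
     (\<forall>x y. cobracket bs (b x y) =
        (\<lambda>p. (ad_tensor1 b x (cobracket bs y) p + ad_tensor2 b x (cobracket bs y) p)
           - (ad_tensor1 b y (cobracket bs x) p + ad_tensor2 b y (cobracket bs x) p)))"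

definition ENL_bialgebra :: "(('n::finite \<Rightarrow> 'k::field) \<Rightarrow> ('n \<Rightarrow> 'k) \<Rightarrow> ('n \<Rightarrow> 'k)) \<Rightarrow> (('n \<Rightarrow> 'k) \<Rightarrow> ('n \<Rightarrow> 'k) \<Rightarrow> ('n \<Rightarrow> 'k)) \<Rightarrow> (('n \<Rightarrow> 'k) \<Rightarrow> ('n \<Rightarrow> 'k)) \<Rightarrow> bool" where
  "ENL_bialgebra b bs E \<longleftrightarrow> lie_bialgebra b bs \<and> ENL_algebra b E \<and> ENL_algebra bs (adj E)"

text \<open>Coadjoint action: coad B a v is the vector with pair (coad B a v) w = - pair v (B a w).
  With B = bracket of g it is ad^*_x on g*; with B = bracket of g* it is the coadjoint
  action of g* on g.\<close>
definition coad :: "(('n::finite \<Rightarrow> 'k::field) \<Rightarrow> ('n \<Rightarrow> 'k) \<Rightarrow> ('n \<Rightarrow> 'k)) \<Rightarrow> ('n \<Rightarrow> 'k) \<Rightarrow> ('n \<Rightarrow> 'k) \<Rightarrow> ('n \<Rightarrow> 'k)" where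
  "coad B a v = (\<lambda>j. - pair v (B a (delta j)))"

text \<open>Drinfel'd double d = g \<oplus> g*, coordinates indexed by 'n + 'n (Inl: g, Inr: g*).\<close>
definition double_bracket :: "(('n::finite \<Rightarrow> 'k::field) \<Rightarrow> ('n \<Rightarrow> 'k) \<Rightarrow> ('n \<Rightarrow> 'k)) \<Rightarrow> (('n \<Rightarrow> 'k) \<Rightarrow> ('n \<Rightarrow> 'k) \<Rightarrow> ('n \<Rightarrow> 'k))
   \<Rightarrow> ('n + 'n \<Rightarrow> 'k) \<Rightarrow> ('n + 'n \<Rightarrow> 'k) \<Rightarrow> ('n + 'n \<Rightarrow> 'k)" where
  "double_bracket b bs v w =
    (let x = v \<circ> Inl; xi = v \<circ> Inr; y = w \<circ> Inl; eta = w \<circ> Inr in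
     (\<lambda>s. case s of
        Inl i \<Rightarrow> vsub (vadd (b x y) (coad bs xi y)) (coad bs eta x) i
      | Inr i \<Rightarrow> vsub (vadd (bs xi eta) (coad b x eta)) (coad b y xi) i))"

text \<open>d^*_r = g* \<oplus> g, coordinates indexed by 'n + 'n (Inl: g*, pairing with the g-part of d;
  Inr: g, pairing with the g*-part of d), bracket (-[xi,eta]_*, [x,y]).\<close>
definition dual_double_bracket :: "(('n::finite \<Rightarrow> 'k::field) \<Rightarrow> ('n \<Rightarrow> 'k) \<Rightarrow> ('n \<Rightarrow> 'k)) \<Rightarrow> (('n \<Rightarrow> 'k) \<Rightarrow> ('n \<Rightarrow> 'k) \<Rightarrow> ('n \<Rightarrow> 'k))
   \<Rightarrow> ('n + 'n \<Rightarrow> 'k) \<Rightarrow> ('n + 'n \<Rightarrow> 'k) \<Rightarrow> ('n + 'n \<Rightarrow> 'k)" where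
  "dual_double_bracket b bs f g =
    (\<lambda>s. case s of
        Inl i \<Rightarrow> - bs (f \<circ> Inl) (g \<circ> Inl) i
      | Inr i \<Rightarrow> b (f \<circ> Inr) (g \<circ> Inr) i)"

definition double_map :: "(('n::finite \<Rightarrow> 'k::field) \<Rightarrow> ('n \<Rightarrow> 'k)) \<Rightarrow> ('n + 'n \<Rightarrow> 'k) \<Rightarrow> ('n + 'n \<Rightarrow> 'k)" where
  "double_map E v = (\<lambda>s. case s of Inl i \<Rightarrow> E (v \<circ> Inl) i | Inr i \<Rightarrow> adj E (v \<circ> Inr) i)"

end

theory Submission
  imports Defs
begin

lemma pair_delta[simp]: "pair (delta k) v = v k"
proof -
  have "pair (delta k) v = (\<Sum>i\<in>UNIV. if k = i then v i else 0)"
    unfolding pair_def by (rule sum.cong) (auto simp: delta_def)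
  then show ?thesis by simp
qed

lemma pair_comm: "pair f x = pair x f"
  unfolding pair_def by (simp add: mult.commute)

lemma vec_eqI: "(\<And>k. pair (delta k) v = pair (delta k) w) \<Longrightarrow> v = w"
  by (auto simp: fun_eq_iff)

lemma pair_vadd[simp]: "pair f (vadd x y) = pair f x + pair f y"
  unfolding pair_def vadd_def by (simp add: algebra_simps sum.distrib)
lemma pair_vsub[simp]: "pair f (vsub x y) = pair f x - pair f y"
  unfolding pair_def vsub_def by (simp add: algebra_simps sum_subtractf)
lemma pair_vscale[simp]: "pair f (vscale c x) = c * pair f x"
  unfolding pair_def vscale_def by (simp add: algebra_simps sum_distrib_left)
lemma pair_vzero[simp]: "pair f vzero = 0"
  unfolding pair_def vzero_def by simp
lemma pair_vadd1[simp]: "pair (vadd x y) f = pair x f + pair y f"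
  by (subst (1 2 3) pair_comm, rule pair_vadd)
lemma pair_vsub1[simp]: "pair (vsub x y) f = pair x f - pair y f"
  by (subst (1 2 3) pair_comm, rule pair_vsub)
lemma pair_vscale1[simp]: "pair (vscale c x) f = c * pair x f"
  by (subst (1 2) pair_comm, rule pair_vscale)
lemma pair_vzero1[simp]: "pair vzero f = 0"
  by (subst pair_comm, rule pair_vzero)

lemma linear_vadd: "linear_map f \<Longrightarrow> f (vadd x y) = vadd (f x) (f y)"
  unfolding linear_map_def by blast
lemma linear_vscale: "linear_map f \<Longrightarrow> f (vscale c x) = vscale c (f x)"
  unfolding linear_map_def by blast
lemma linear_vzero: "linear_map f \<Longrightarrow> f vzero = vzero"
  using linear_vscale[of f 0 vzero] by (simp add: vscale_def vzero_def)
lemma linear_vsub: "linear_map f \<Longrightarrow> f (vsub x y) = vsub (f x) (f y)"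
proof -
  assume l: "linear_map f"
  have "vsub x y = vadd x (vscale (-1) y)" by (simp add: vsub_def vadd_def vscale_def fun_eq_iff)
  moreover have "vsub (f x) (f y) = vadd (f x) (vscale (-1) (f y))" by (simp add: vsub_def vadd_def vscale_def fun_eq_iff)
  ultimately show ?thesis using l by (simp add: linear_vadd linear_vscale)
qed

lemma linear_sum_aux:
  assumes l: "linear_map f" and fin: "finite A"
  shows "f (\<lambda>i. \<Sum>j\<in>A. x j * delta j i) = (\<lambda>i. \<Sum>j\<in>A. x j * f (delta j) i)"
  using fin
proof (induction A rule: finite_induct)
  case empty
  then show ?case using linear_vzero[OF l] by (simp add: vzero_def)
next
  case (insert a A)
  have "(\<lambda>i. \<Sum>j\<in>insert a A. x j * delta j i) = vadd (vscale (x a) (delta a)) (\<lambda>i. \<Sum>j\<in>A. x j * delta j i)"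
    using insert by (simp add: vadd_def vscale_def fun_eq_iff)
  then have "f (\<lambda>i. \<Sum>j\<in>insert a A. x j * delta j i) = vadd (vscale (x a) (f (delta a))) (f (\<lambda>i. \<Sum>j\<in>A. x j * delta j i))"
    using l by (simp add: linear_vadd linear_vscale)
  then show ?case using insert by (simp add: vadd_def vscale_def fun_eq_iff)
qed

lemma vec_expand: "(\<lambda>i. \<Sum>j\<in>UNIV. x j * delta j i) = (x::'n::finite \<Rightarrow> 'k::field)"
proof
  fix i
  have "(\<Sum>j\<in>UNIV. x j * delta j i) = (\<Sum>j\<in>UNIV. if i = j then x j else 0)"
    by (rule sum.cong) (auto simp: delta_def)
  then show "(\<Sum>j\<in>UNIV. x j * delta j i) = x i" by simp
qed

lemma linear_expand:
  fixes f :: "('n::finite \<Rightarrow> 'k::field) \<Rightarrow> ('m \<Rightarrow> 'k)"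
  assumes l: "linear_map f"
  shows "f x i = (\<Sum>j\<in>UNIV. x j * f (delta j) i)"
  using linear_sum_aux[OF l, of UNIV x] by (simp add: vec_expand)

lemma pair_transpose:
  fixes F :: "('n::finite \<Rightarrow> 'k::field) \<Rightarrow> ('m::finite \<Rightarrow> 'k)"
  assumes l: "linear_map F"
  shows "pair xi (\<lambda>j. pair v (F (delta j))) = pair v (F xi)"
proof -
  have "pair v (F xi) = (\<Sum>i\<in>UNIV. v i * (\<Sum>j\<in>UNIV. xi j * F (delta j) i))"
    unfolding pair_def by (simp only: linear_expand[OF l, of xi])
  also have "\<dots> = (\<Sum>j\<in>UNIV. xi j * (\<Sum>i\<in>UNIV. v i * F (delta j) i))"
    unfolding sum_distrib_left by (subst sum.swap) (simp add: algebra_simps)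
  finally show ?thesis unfolding pair_def by simp
qed

lemma coad_pair:
  "linear_map (B a) \<Longrightarrow> pair xi (coad B a v) = - pair v (B a xi)"
  unfolding coad_def using pair_transpose[of "B a" xi v]
  by (simp add: pair_def sum_negf)

lemma adj_pair:
  "linear_map E \<Longrightarrow> pair (adj E xi) x = pair xi (E x)"
  unfolding adj_def using pair_transpose[of E x xi] by (simp add: pair_comm)


lemma linear_mapI: "(\<And>x y. f (vadd x y) = vadd (f x) (f y)) \<Longrightarrow> (\<And>c x. f (vscale c x) = vscale c (f x)) \<Longrightarrow> linear_map f"
  unfolding linear_map_def by blast

lemma pair_expand:
  fixes F :: "('n::finite \<Rightarrow> 'k::field) \<Rightarrow> ('m::finite \<Rightarrow> 'k)"
  assumes l: "linear_map F"
  shows "pair v (F xi) = (\<Sum>j\<in>UNIV. xi j * pair v (F (delta j)))"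
  using pair_transpose[OF l, of xi v] unfolding pair_def[of xi] by simp

definition slin :: "(('n \<Rightarrow> 'k::field) \<Rightarrow> 'k) \<Rightarrow> bool" where
  "slin f \<longleftrightarrow> (\<forall>x y. f (vadd x y) = f x + f y) \<and> (\<forall>c x. f (vscale c x) = c * f x)"

lemma slin_expand:
  fixes f :: "('n::finite \<Rightarrow> 'k::field) \<Rightarrow> 'k"
  assumes "slin f"
  shows "f xi = (\<Sum>j\<in>UNIV. xi j * f (delta j))"
proof -
  let ?F = "\<lambda>x. (\<lambda>_::unit. f x)"
  have "linear_map ?F" using assms unfolding slin_def linear_map_def by (simp add: vadd_def vscale_def)
  then have "?F xi () = (\<Sum>j\<in>UNIV. xi j * ?F (delta j) ())" by (rule linear_expand)
  then show ?thesis by simp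
qed

lemma bilinear_zero:
  fixes Q :: "('n::finite \<Rightarrow> 'k::field) \<Rightarrow> ('n \<Rightarrow> 'k) \<Rightarrow> 'k"
  assumes "\<And>a. slin (Q a)" "\<And>b. slin (\<lambda>a. Q a b)" "\<And>i j. Q (delta i) (delta j) = 0"
  shows "Q xi eta = 0"
proof -
  have "Q xi eta = (\<Sum>j\<in>UNIV. eta j * Q xi (delta j))" by (rule slin_expand[OF assms(1)])
  also have "\<dots> = 0"
  proof (rule sum.neutral, rule ballI)
    fix j
    have "Q xi (delta j) = (\<Sum>i\<in>UNIV. xi i * Q (delta i) (delta j))"
      by (rule slin_expand[OF assms(2)])
    then show "eta j * Q xi (delta j) = 0" using assms(3) by simp
  qed
  finally show ?thesis .
qed

lemma bil_l: "bilinear_map B \<Longrightarrow> linear_map (B x)"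
  unfolding bilinear_map_def by blast
lemma bil_r: "bilinear_map B \<Longrightarrow> linear_map (\<lambda>x. B x y)"
  unfolding bilinear_map_def by blast

lemma coad_vadd2: "coad B a (vadd v w) = vadd (coad B a v) (coad B a w)"
  by (simp add: coad_def fun_eq_iff) (simp add: vadd_def)
lemma coad_vsub2: "coad B a (vsub v w) = vsub (coad B a v) (coad B a w)"
  by (simp add: coad_def fun_eq_iff) (simp add: vsub_def)
lemma coad_vscale2: "coad B a (vscale c v) = vscale c (coad B a v)"
  by (simp add: coad_def fun_eq_iff) (simp add: vscale_def)
lemma coad_vzero2: "coad B a vzero = vzero"
  by (simp add: coad_def fun_eq_iff) (simp add: vzero_def)
lemma coad_linear2: "linear_map (coad B a)"
  by (rule linear_mapI) (simp_all add: coad_vadd2 coad_vscale2)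

lemma bil_vadd1: "bilinear_map B \<Longrightarrow> B (vadd a a') y = vadd (B a y) (B a' y)"
  using linear_vadd[OF bil_r[of B y]] by simp
lemma bil_vsub1: "bilinear_map B \<Longrightarrow> B (vsub a a') y = vsub (B a y) (B a' y)"
  using linear_vsub[OF bil_r[of B y]] by simp
lemma bil_vscale1: "bilinear_map B \<Longrightarrow> B (vscale c a) y = vscale c (B a y)"
  using linear_vscale[OF bil_r[of B y]] by simp
lemma bil_vzero1: "bilinear_map B \<Longrightarrow> B vzero y = vzero"
  using linear_vzero[OF bil_r[of B y]] by simp
lemma bil_vadd2: "bilinear_map B \<Longrightarrow> B y (vadd a a') = vadd (B y a) (B y a')"
  using linear_vadd[OF bil_l[of B y]] by simp
lemma bil_vsub2: "bilinear_map B \<Longrightarrow> B y (vsub a a') = vsub (B y a) (B y a')"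
  using linear_vsub[OF bil_l[of B y]] by simp
lemma bil_vscale2: "bilinear_map B \<Longrightarrow> B y (vscale c a) = vscale c (B y a)"
  using linear_vscale[OF bil_l[of B y]] by simp
lemma bil_vzero2: "bilinear_map B \<Longrightarrow> B y vzero = vzero"
  using linear_vzero[OF bil_l[of B y]] by simp

lemma coad_vadd1: "bilinear_map B \<Longrightarrow> coad B (vadd a a') v = vadd (coad B a v) (coad B a' v)"
  by (rule ext) (simp add: coad_def bil_vadd1, simp add: vadd_def)
lemma coad_vsub1: "bilinear_map B \<Longrightarrow> coad B (vsub a a') v = vsub (coad B a v) (coad B a' v)"
  by (rule ext) (simp add: coad_def bil_vsub1, simp add: vsub_def)
lemma coad_vscale1: "bilinear_map B \<Longrightarrow> coad B (vscale c a) v = vscale c (coad B a v)"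
  by (rule ext) (simp add: coad_def bil_vscale1, simp add: vscale_def)
lemma coad_vzero1: "bilinear_map B \<Longrightarrow> coad B vzero v = vzero"
  by (rule ext) (simp add: coad_def bil_vzero1, simp add: vzero_def)
lemma coad_linear1: "bilinear_map B \<Longrightarrow> linear_map (\<lambda>a. coad B a v)"
  by (rule linear_mapI) (simp_all add: coad_vadd1 coad_vscale1)

lemma coad_pairL: "bilinear_map B \<Longrightarrow> pair xi (coad B a v) = - pair v (B a xi)"
  by (rule coad_pair[OF bil_l])
lemma coad_pairR: "bilinear_map B \<Longrightarrow> pair (coad B a v) xi = - pair v (B a xi)"
  by (subst pair_comm, rule coad_pair[OF bil_l])

lemma lin_comp: "linear_map f \<Longrightarrow> linear_map g \<Longrightarrow> linear_map (\<lambda>x. f (g x))"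
  unfolding linear_map_def by simp

lemma lie_bil: "lie_algebra B \<Longrightarrow> bilinear_map B"
  unfolding lie_algebra_def by blast

lemma lie_anti:
  assumes "lie_algebra B"
  shows "B y x = vsub vzero (B x y)"
proof -
  have bl: "bilinear_map B" and alt: "\<And>x. B x x = vzero" using assms unfolding lie_algebra_def by blast+
  have "vzero = B (vadd x y) (vadd x y)" using alt by simp
  also have "\<dots> = vadd (vadd (B x x) (B y x)) (vadd (B x y) (B y y))"
    using linear_vadd[OF bil_l[OF bl]] linear_vadd[OF bil_r[OF bl]] by simp
  finally have "vzero = vadd (B y x) (B x y)" using alt by (simp add: vadd_def vzero_def)
  then show ?thesis by (auto simp: fun_eq_iff vadd_def vzero_def vsub_def algebra_simps) (metis add_eq_0_iff)
qed

lemma lie_jacobi_deriv: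
  assumes "lie_algebra B"
  shows "B (B x y) z = vsub (B x (B y z)) (B y (B x z))"
proof -
  have bl: "bilinear_map B" using assms by (rule lie_bil)
  have j: "vadd (vadd (B x (B y z)) (B y (B z x))) (B z (B x y)) = vzero"
    using assms unfolding lie_algebra_def by blast
  have a1: "B z (B x y) = vsub vzero (B (B x y) z)" by (rule lie_anti[OF assms])
  have a2: "B z x = vsub vzero (B x z)" by (rule lie_anti[OF assms])
  have a3: "B y (B z x) = vsub vzero (B y (B x z))"
    unfolding a2 linear_vsub[OF bil_l[OF bl]] linear_vzero[OF bil_l[OF bl]] ..
  from j show ?thesis unfolding a1 a3
    by (auto simp: fun_eq_iff vadd_def vsub_def vzero_def) 
qed


definition cgen :: "(('n::finite \<Rightarrow> 'k::field) \<Rightarrow> ('n \<Rightarrow> 'k) \<Rightarrow> ('n \<Rightarrow> 'k)) \<Rightarrow> (('n \<Rightarrow> 'k) \<Rightarrow> ('n \<Rightarrow> 'k) \<Rightarrow> ('n \<Rightarrow> 'k)) \<Rightarrow> bool" where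
  "cgen B BS \<longleftrightarrow> (\<forall>xi eta x y. pair (B x y) (BS xi eta) =
      - pair y (BS (coad B x xi) eta) - pair y (BS xi (coad B x eta))
      + pair x (BS (coad B y xi) eta) + pair x (BS xi (coad B y eta)))"

lemma ad1_cob:
  assumes "bilinear_map B" "bilinear_map BS"
  shows "ad_tensor1 B x (cobracket BS y) (i, j) = - pair y (BS (coad B x (delta i)) (delta j))"
proof -
  have "pair y (BS (coad B x (delta i)) (delta j)) = (\<Sum>k\<in>UNIV. coad B x (delta i) k * pair y (BS (delta k) (delta j)))"
    by (rule pair_expand[OF bil_r[OF assms(2)]])
  also have "\<dots> = (\<Sum>k\<in>UNIV. - (B x (delta k) i * pair (BS (delta k) (delta j)) y))"
    by (simp add: coad_def pair_comm)
  finally show ?thesis unfolding ad_tensor1_def cobracket_def by (simp add: sum_negf)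
qed

lemma ad2_cob:
  assumes "bilinear_map B" "bilinear_map BS"
  shows "ad_tensor2 B x (cobracket BS y) (i, j) = - pair y (BS (delta i) (coad B x (delta j)))"
proof -
  have "pair y (BS (delta i) (coad B x (delta j))) = (\<Sum>k\<in>UNIV. coad B x (delta j) k * pair y (BS (delta i) (delta k)))"
    by (rule pair_expand[OF bil_l[OF assms(2)]])
  also have "\<dots> = (\<Sum>k\<in>UNIV. - (B x (delta k) j * pair (BS (delta i) (delta k)) y))"
    by (simp add: coad_def pair_comm)
  finally show ?thesis unfolding ad_tensor2_def cobracket_def by (simp add: sum_negf)
qed

lemma compat_iff:
  fixes B BS :: "('n::finite \<Rightarrow> 'k::field) \<Rightarrow> ('n \<Rightarrow> 'k) \<Rightarrow> ('n \<Rightarrow> 'k)"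
  assumes bB: "bilinear_map B" and bS: "bilinear_map BS"
  shows "(\<forall>x y. cobracket BS (B x y) =
        (\<lambda>p. (ad_tensor1 B x (cobracket BS y) p + ad_tensor2 B x (cobracket BS y) p)
           - (ad_tensor1 B y (cobracket BS x) p + ad_tensor2 B y (cobracket BS x) p)))
     \<longleftrightarrow> cgen B BS" (is "?L \<longleftrightarrow> ?R")
proof
  assume R: ?R
  show ?L
  proof (intro allI ext)
    fix x y and p :: "'n \<times> 'n"
    obtain i j where p: "p = (i, j)" by (cases p)
    have "pair (B x y) (BS (delta i) (delta j)) =
      - pair y (BS (coad B x (delta i)) (delta j)) - pair y (BS (delta i) (coad B x (delta j)))
      + pair x (BS (coad B y (delta i)) (delta j)) + pair x (BS (delta i) (coad B y (delta j)))"
      using R unfolding cgen_def by blast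
    then show "cobracket BS (B x y) p = (ad_tensor1 B x (cobracket BS y) p + ad_tensor2 B x (cobracket BS y) p)
           - (ad_tensor1 B y (cobracket BS x) p + ad_tensor2 B y (cobracket BS x) p)"
      unfolding p ad1_cob[OF bB bS] ad2_cob[OF bB bS]
      by (simp add: cobracket_def pair_comm[of "BS _ _"])
  qed
next
  assume L: ?L
  have key: "pair (B x y) (BS xi eta) =
      - pair y (BS (coad B x xi) eta) - pair y (BS xi (coad B x eta))
      + pair x (BS (coad B y xi) eta) + pair x (BS xi (coad B y eta))" for xi eta x y
  proof -
    let ?Q = "\<lambda>xi eta. pair (B x y) (BS xi eta) -
      (- pair y (BS (coad B x xi) eta) - pair y (BS xi (coad B x eta))
      + pair x (BS (coad B y xi) eta) + pair x (BS xi (coad B y eta)))"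
    have "?Q xi eta = 0"
    proof (rule bilinear_zero[where Q="?Q"])
      fix a
      show "slin (?Q a)" unfolding slin_def
        by (simp add: bil_vadd2[OF bS] bil_vscale2[OF bS] coad_vadd2 coad_vscale2 algebra_simps)
    next
      fix c
      show "slin (\<lambda>a. ?Q a c)" unfolding slin_def
        by (simp add: bil_vadd1[OF bS] bil_vscale1[OF bS] coad_vadd2 coad_vscale2 algebra_simps)
    next
      fix i j
      have "cobracket BS (B x y) (i, j) = (ad_tensor1 B x (cobracket BS y) (i, j) + ad_tensor2 B x (cobracket BS y) (i, j))
           - (ad_tensor1 B y (cobracket BS x) (i, j) + ad_tensor2 B y (cobracket BS x) (i, j))"
        using L by metis
      then show "?Q (delta i) (delta j) = 0"
        unfolding ad1_cob[OF bB bS] ad2_cob[OF bB bS]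
        by (simp add: cobracket_def pair_comm[of "BS _ _"])
    qed
    then show "pair (B x y) (BS xi eta) =
      - pair y (BS (coad B x xi) eta) - pair y (BS xi (coad B x eta))
      + pair x (BS (coad B y xi) eta) + pair x (BS xi (coad B y eta))" by simp
  qed
  show ?R unfolding cgen_def using key by blast
qed


lemma comp_vadd: "vadd U V \<circ> f = vadd (U \<circ> f) (V \<circ> f)" by (simp add: vadd_def fun_eq_iff)
lemma comp_vsub: "vsub U V \<circ> f = vsub (U \<circ> f) (V \<circ> f)" by (simp add: vsub_def fun_eq_iff)
lemma comp_vscale: "vscale c U \<circ> f = vscale c (U \<circ> f)" by (simp add: vscale_def fun_eq_iff)
lemma comp_vzero: "vzero \<circ> f = vzero" by (simp add: vzero_def fun_eq_iff)

lemma pair_sum: "pair (U :: ('a::finite + 'b::finite) \<Rightarrow> 'k::field) V = pair (U \<circ> Inl) (V \<circ> Inl) + pair (U \<circ> Inr) (V \<circ> Inr)"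
  unfolding pair_def by (subst UNIV_Plus_UNIV[symmetric], subst sum.Plus) auto

lemma sum_eqI: "U \<circ> Inl = V \<circ> Inl \<Longrightarrow> U \<circ> Inr = V \<circ> Inr \<Longrightarrow> U = V"
  by (auto simp: fun_eq_iff comp_def) (metis sum.exhaust)

lemma test_zero: "(\<And>t. pair t v = 0) \<Longrightarrow> v = vzero"
  by (rule vec_eqI) (simp add: vzero_def del: pair_delta, simp add: vzero_def)

lemma db_Inl: "double_bracket b bs u v \<circ> Inl = vsub (vadd (b (u\<circ>Inl) (v\<circ>Inl)) (coad bs (u\<circ>Inr) (v\<circ>Inl))) (coad bs (v\<circ>Inr) (u\<circ>Inl))"
  unfolding double_bracket_def Let_def by (simp add: fun_eq_iff)
lemma db_Inr: "double_bracket b bs u v \<circ> Inr = vsub (vadd (bs (u\<circ>Inr) (v\<circ>Inr)) (coad b (u\<circ>Inl) (v\<circ>Inr))) (coad b (v\<circ>Inl) (u\<circ>Inr))"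
  unfolding double_bracket_def Let_def by (simp add: fun_eq_iff)

definition swp :: "('n + 'n \<Rightarrow> 'k) \<Rightarrow> ('n + 'n \<Rightarrow> 'k)" where
  "swp f = (\<lambda>s. case s of Inl i \<Rightarrow> f (Inr i) | Inr i \<Rightarrow> f (Inl i))"
lemma swp_Inl[simp]: "swp f \<circ> Inl = f \<circ> Inr" by (simp add: swp_def fun_eq_iff)
lemma swp_Inr[simp]: "swp f \<circ> Inr = f \<circ> Inl" by (simp add: swp_def fun_eq_iff)
lemma swp_swp[simp]: "swp (swp f) = f" by (simp add: swp_def fun_eq_iff split: sum.split)

locale bialg =
  fixes b bs :: "('n::finite \<Rightarrow> 'k::field) \<Rightarrow> ('n \<Rightarrow> 'k) \<Rightarrow> ('n \<Rightarrow> 'k)"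
  assumes lb: "lie_algebra b" and ls: "lie_algebra bs" and cg: "cgen b bs"
begin

lemma bb: "bilinear_map b" using lb by (rule lie_bil)
lemma bbs: "bilinear_map bs" using ls by (rule lie_bil)

lemmas lin_simps = bil_vadd1[OF bb] bil_vsub1[OF bb] bil_vscale1[OF bb] bil_vzero1[OF bb]
  bil_vadd2[OF bb] bil_vsub2[OF bb] bil_vscale2[OF bb] bil_vzero2[OF bb]
  bil_vadd1[OF bbs] bil_vsub1[OF bbs] bil_vscale1[OF bbs] bil_vzero1[OF bbs]
  bil_vadd2[OF bbs] bil_vsub2[OF bbs] bil_vscale2[OF bbs] bil_vzero2[OF bbs]
  coad_vadd1[OF bb] coad_vsub1[OF bb] coad_vscale1[OF bb] coad_vzero1[OF bb]
  coad_vadd1[OF bbs] coad_vsub1[OF bbs] coad_vscale1[OF bbs] coad_vzero1[OF bbs]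
  coad_vadd2 coad_vsub2 coad_vscale2 coad_vzero2
  comp_vadd comp_vsub comp_vscale comp_vzero

lemma anti_b: "pair t (b y x) = - pair t (b x y)"
  by (subst lie_anti[OF lb]) simp
lemma anti_bs: "pair t (bs y x) = - pair t (bs x y)"
  by (subst lie_anti[OF ls]) simp

lemma R1: "pair t (b x (coad bs eta z)) = pair z (bs eta (coad b x t))"
proof -
  have "pair t (b x (coad bs eta z)) = - pair (coad bs eta z) (coad b x t)"
    using coad_pairL[OF bb, of "coad bs eta z" x t] by simp
  also have "\<dots> = pair z (bs eta (coad b x t))" by (simp add: coad_pairR[OF bbs])
  finally show ?thesis .
qed
lemma R2: "pair t (b (coad bs eta z) x) = - pair z (bs eta (coad b x t))"
  by (simp add: anti_b[of t "coad bs eta z"] R1)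

lemma Rorient: "pair (bs p q) (b r s) = pair (b r s) (bs p q)" by (rule pair_comm)

lemmas pair_simps = coad_pairL[OF bb] coad_pairR[OF bb] coad_pairL[OF bbs] coad_pairR[OF bbs]
  R1 R2 Rorient lie_jacobi_deriv[OF lb] lie_jacobi_deriv[OF ls]

lemma cg_inst: "pair (b x y) (bs xi eta) =
      - pair y (bs (coad b x xi) eta) - pair y (bs xi (coad b x eta))
      + pair x (bs (coad b y xi) eta) + pair x (bs xi (coad b y eta))"
  using cg unfolding cgen_def by blast

lemma jac_b: "pair t (b x (b y z)) + pair t (b y (b z x)) + pair t (b z (b x y)) = 0"
proof -
  have "vadd (vadd (b x (b y z)) (b y (b z x))) (b z (b x y)) = vzero"
    using lb unfolding lie_algebra_def by blast
  then have "pair t (vadd (vadd (b x (b y z)) (b y (b z x))) (b z (b x y))) = 0" by simp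
  then show ?thesis by simp
qed

lemma jac_bs: "pair t (bs x (bs y z)) + pair t (bs y (bs z x)) + pair t (bs z (bs x y)) = 0"
proof -
  have "vadd (vadd (bs x (bs y z)) (bs y (bs z x))) (bs z (bs x y)) = vzero"
    using ls unfolding lie_algebra_def by blast
  then have "pair t (vadd (vadd (bs x (bs y z)) (bs y (bs z x))) (bs z (bs x y))) = 0" by simp
  then show ?thesis by simp
qed

lemma alt_b: "b x x = vzero" using lb unfolding lie_algebra_def by blast
lemma alt_bs: "bs x x = vzero" using ls unfolding lie_algebra_def by blast

lemma anti_coad: "pair p (bs (coad b q r) s) = - pair p (bs s (coad b q r))"
  by (rule anti_bs)

lemma jac_Inl:
  "pair t ((vadd (vadd (double_bracket b bs u (double_bracket b bs v w)) (double_bracket b bs v (double_bracket b bs w u))) (double_bracket b bs w (double_bracket b bs u v))) \<circ> Inl) = 0"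
  using jac_b[of t "u\<circ>Inl" "v\<circ>Inl" "w\<circ>Inl"]
  by (simp add: db_Inl db_Inr lin_simps pair_simps cg_inst algebra_simps)

lemma jac_Inr:
  "pair t ((vadd (vadd (double_bracket b bs u (double_bracket b bs v w)) (double_bracket b bs v (double_bracket b bs w u))) (double_bracket b bs w (double_bracket b bs u v))) \<circ> Inr) = 0"
  using jac_bs[of t "u\<circ>Inr" "v\<circ>Inr" "w\<circ>Inr"]
  by (simp add: db_Inl db_Inr lin_simps pair_simps cg_inst anti_coad algebra_simps)


lemma test_eq: assumes "\<And>t. pair t V = pair t W" shows "V = W"
  by (rule vec_eqI, rule assms)

lemma comp_Inl_sum: "(\<lambda>s. case s of Inl i \<Rightarrow> f i | Inr i \<Rightarrow> g i) \<circ> Inl = f" by (simp add: fun_eq_iff)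
lemma comp_Inr_sum: "(\<lambda>s. case s of Inl i \<Rightarrow> f i | Inr i \<Rightarrow> g i) \<circ> Inr = g" by (simp add: fun_eq_iff)

abbreviation "D \<equiv> double_bracket b bs"
abbreviation "DD \<equiv> dual_double_bracket b bs"

lemma D_vadd1: "D (vadd u u') v = vadd (D u v) (D u' v)"
  by (rule sum_eqI; rule test_eq) (simp_all add: db_Inl db_Inr lin_simps algebra_simps)
lemma D_vscale1: "D (vscale c u) v = vscale c (D u v)"
  by (rule sum_eqI; rule test_eq) (simp_all add: db_Inl db_Inr lin_simps algebra_simps)
lemma D_vadd2: "D v (vadd u u') = vadd (D v u) (D v u')"
  by (rule sum_eqI; rule test_eq) (simp_all add: db_Inl db_Inr lin_simps algebra_simps)
lemma D_vscale2: "D v (vscale c u) = vscale c (D v u)"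
  by (rule sum_eqI; rule test_eq) (simp_all add: db_Inl db_Inr lin_simps algebra_simps)
lemma D_alt: "D u u = vzero"
  by (rule sum_eqI; rule test_eq) (simp_all add: db_Inl db_Inr lin_simps algebra_simps alt_b alt_bs)

lemma D_bil: "bilinear_map D"
  unfolding bilinear_map_def linear_map_def by (simp add: D_vadd1 D_vscale1 D_vadd2 D_vscale2)

lemma D_lie: "lie_algebra D"
  unfolding lie_algebra_def
proof (intro conjI allI)
  show "bilinear_map D" by (rule D_bil)
  show "D x x = vzero" for x by (rule D_alt)
  show "vadd (vadd (D x (D y z)) (D y (D z x))) (D z (D x y)) = vzero" for x y z
    by (rule sum_eqI; rule test_eq) (simp_all only: jac_Inl jac_Inr comp_vzero pair_vzero)
qed

lemma ddb_Inl: "DD f g \<circ> Inl = vsub vzero (bs (f\<circ>Inl) (g\<circ>Inl))"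
  unfolding dual_double_bracket_def by (simp add: fun_eq_iff vsub_def vzero_def)
lemma ddb_Inr: "DD f g \<circ> Inr = b (f\<circ>Inr) (g\<circ>Inr)"
  unfolding dual_double_bracket_def by (simp add: fun_eq_iff)

lemma DD_lie: "lie_algebra DD"
  unfolding lie_algebra_def bilinear_map_def linear_map_def
  apply (intro conjI allI)
  apply (rule sum_eqI; rule test_eq; simp add: ddb_Inl ddb_Inr lin_simps algebra_simps alt_b alt_bs)+
  subgoal by (metis jac_bs add.assoc)
  subgoal by (metis jac_b add.assoc)
  done


lemma flipB: "pair (b p q) v = pair v (b p q)" by (rule pair_comm)
lemma flipBS: "pair (bs p q) v = pair v (bs p q)" by (rule pair_comm)
lemmas pair_simps0 = coad_pairL[OF bb] coad_pairR[OF bb] coad_pairL[OF bbs] coad_pairR[OF bbs]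

lemma Rform: "pair (DD P Q) w = pair ((D w (swp P)) \<circ> Inr) (Q \<circ> Inr) + pair ((D w (swp Q)) \<circ> Inl) (P \<circ> Inl)"
  by (simp add: pair_sum ddb_Inl ddb_Inr db_Inl db_Inr lin_simps pair_simps0 flipB flipBS
     anti_bs[of "w\<circ>Inl" "Q\<circ>Inl" "P\<circ>Inl"])

lemma invar: "pair (swp a) (D u c) = - pair (swp (D u a)) c"
  by (simp add: pair_sum db_Inl db_Inr lin_simps pair_simps0 flipB flipBS
     anti_bs[of "u\<circ>Inl" "c\<circ>Inr" "a\<circ>Inr"] anti_b[of "u\<circ>Inr" "c\<circ>Inl" "a\<circ>Inl"])


lemma coad_D: "coad D u P = swp (D u (swp P))"
proof (rule ext)
  fix s
  have "coad D u P s = - pair (swp (swp P)) (D u (delta s))" by (simp add: coad_def)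
  also have "\<dots> = pair (swp (D u (swp P))) (delta s)" by (simp only: invar) simp
  also have "\<dots> = swp (D u (swp P)) s" by (simp add: pair_comm[of _ "delta s"])
  finally show "coad D u P s = swp (D u (swp P)) s" .
qed

lemma DD_bil: "bilinear_map DD" using DD_lie by (rule lie_bil)

lemma cgen_D: "cgen D DD"
  unfolding cgen_def
proof (intro allI)
  fix P Q u v :: "'n + 'n \<Rightarrow> 'k"
  obtain a where a: "P = swp a" by (metis swp_swp)
  obtain c where c: "Q = swp c" by (metis swp_swp)
  have jd: "\<And>x y z. D (D x y) z = vsub (D x (D y z)) (D y (D x z))" by (rule lie_jacobi_deriv[OF D_lie])
  show "pair (D u v) (DD P Q) =
       - pair v (DD (coad D u P) Q) - pair v (DD P (coad D u Q)) +
       pair u (DD (coad D v P) Q) + pair u (DD P (coad D v Q))"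
    unfolding a c
    by (simp add: pair_comm[of _ "DD _ _"] Rform coad_D jd comp_vsub
       pair_comm[of "D v a \<circ> Inr" "D u c \<circ> Inl"] pair_comm[of "D v c \<circ> Inl" "D u a \<circ> Inr"])
qed


end

lemma adj_vadd: "adj E (vadd x y) = vadd (adj E x) (adj E y)"
  by (simp add: adj_def fun_eq_iff) (simp add: vadd_def)
lemma adj_vsub: "adj E (vsub x y) = vsub (adj E x) (adj E y)"
  by (simp add: adj_def fun_eq_iff) (simp add: vsub_def)
lemma adj_vscale: "adj E (vscale c x) = vscale c (adj E x)"
  by (simp add: adj_def fun_eq_iff) (simp add: vscale_def)
lemma adj_vzero: "adj E vzero = vzero"
  by (simp add: adj_def fun_eq_iff) (simp add: vzero_def)
lemma adj_linear: "linear_map (adj E)"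
  by (rule linear_mapI) (simp_all add: adj_vadd adj_vscale)

lemma pair_zero_fun[simp]: "pair f (\<lambda>j. 0) = 0" by (simp add: pair_def)

lemma delta_Inl_Inl: "delta (Inl k) \<circ> Inl = delta k" by (simp add: delta_def fun_eq_iff)
lemma delta_Inl_Inr: "delta (Inl k) \<circ> Inr = vzero" by (simp add: delta_def vzero_def fun_eq_iff)
lemma delta_Inr_Inl: "delta (Inr k) \<circ> Inl = vzero" by (simp add: delta_def vzero_def fun_eq_iff)
lemma delta_Inr_Inr: "delta (Inr k) \<circ> Inr = delta k" by (simp add: delta_def fun_eq_iff)

lemma dm_Inl: "double_map E v \<circ> Inl = E (v \<circ> Inl)" by (simp add: double_map_def fun_eq_iff)
lemma dm_Inr: "double_map E v \<circ> Inr = adj E (v \<circ> Inr)" by (simp add: double_map_def fun_eq_iff)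

locale enl = bialg b bs
  for b bs :: "('n::finite \<Rightarrow> 'k::field) \<Rightarrow> ('n \<Rightarrow> 'k) \<Rightarrow> ('n \<Rightarrow> 'k)" +
  fixes E :: "('n \<Rightarrow> 'k) \<Rightarrow> ('n \<Rightarrow> 'k)"
  assumes eb: "ENL_algebra b E" and es: "ENL_algebra bs (adj E)"
begin

lemma lE: "linear_map E" using eb unfolding ENL_algebra_def by blast
lemma Eb: "E (b x y) = b x (E y)" using eb unfolding ENL_algebra_def by blast
lemma Ebs: "adj E (bs x y) = bs x (adj E y)" using es unfolding ENL_algebra_def by blast
lemma Eb': "b (E x) y = E (b x y)"
  by (metis Eb lie_anti[OF lb] linear_vsub[OF lE] linear_vzero[OF lE])
lemma Ebs': "bs (adj E x) y = adj E (bs x y)"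
  by (metis Ebs lie_anti[OF ls] adj_vsub adj_vzero)

lemma pE: "pair t (E w) = pair (adj E t) w" by (rule adj_pair[OF lE, symmetric])
lemma pAdj: "pair (adj E w) t = pair w (E t)" by (rule adj_pair[OF lE])
lemma pAdj': "pair t (adj E w) = pair w (E t)" by (subst pair_comm, rule pAdj)
lemma pE': "pair (E w) t = pair (adj E t) w" by (subst pair_comm, rule pE)
lemma pA: "pair y (adj E w) = pair (adj E w) y" by (rule pair_comm)

lemmas Esimps = linear_vadd[OF lE] linear_vsub[OF lE] linear_vscale[OF lE] linear_vzero[OF lE]
  adj_vadd adj_vsub adj_vscale adj_vzero

lemma LE1: "E (coad bs xi y) = coad bs xi (E y)"
  by (rule test_eq) (simp add: pE pE' pA pair_simps0 Ebs[symmetric])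
lemma LE2: "E (coad bs eta x) = coad bs (adj E eta) x"
  by (rule test_eq) (simp add: pE pE' pA pair_simps0 Ebs[symmetric] Ebs')
lemma LE3: "adj E (coad b x eta) = coad b x (adj E eta)"
  by (rule test_eq) (simp add: pAdj pAdj' pair_simps0 Eb[symmetric])
lemma LE4: "adj E (coad b y xi) = coad b (E y) xi"
  by (rule test_eq) (simp add: pAdj pAdj' pair_simps0 Eb[symmetric] Eb')

lemma dm_lin: "linear_map (double_map E)"
  by (rule linear_mapI; rule sum_eqI) (simp_all add: dm_Inl dm_Inr Esimps comp_vadd comp_vscale)

lemma ENL_D: "ENL_algebra D (double_map E)"
  unfolding ENL_algebra_def
proof (intro conjI allI)
  show "lie_algebra D" by (rule D_lie)
  show "linear_map (double_map E)" by (rule dm_lin)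
  fix u v
  show "double_map E (D u v) = D u (double_map E v)"
    by (rule sum_eqI) (simp_all add: dm_Inl dm_Inr db_Inl db_Inr Esimps Eb Ebs
       LE1[of "u\<circ>Inr" "v\<circ>Inl"] LE2[of "v\<circ>Inr" "u\<circ>Inl"] LE3[of "u\<circ>Inl" "v\<circ>Inr"] LE4[of "v\<circ>Inl" "u\<circ>Inr"])
qed

lemma adj_dm_Inl: "adj (double_map E) f \<circ> Inl = adj E (f \<circ> Inl)"
  by (simp add: fun_eq_iff adj_def pair_sum dm_Inl dm_Inr delta_Inl_Inl delta_Inl_Inr Esimps)
lemma adj_dm_Inr: "adj (double_map E) f \<circ> Inr = E (f \<circ> Inr)"
proof (rule ext)
  fix j
  have "(adj (double_map E) f \<circ> Inr) j = pair (f \<circ> Inr) (adj E (delta j))"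
    by (simp add: adj_def pair_sum dm_Inl dm_Inr delta_Inr_Inl delta_Inr_Inr Esimps)
  also have "\<dots> = pair (delta j) (E (f \<circ> Inr))" by (subst pair_comm, rule adj_pair[OF lE])
  finally show "(adj (double_map E) f \<circ> Inr) j = E (f \<circ> Inr) j" by simp
qed

lemma ENL_DD: "ENL_algebra DD (adj (double_map E))"
  unfolding ENL_algebra_def
proof (intro conjI allI)
  show "lie_algebra DD" by (rule DD_lie)
  show "linear_map (adj (double_map E))" by (rule adj_linear)
  fix f g
  show "adj (double_map E) (DD f g) = DD f (adj (double_map E) g)"
    by (rule sum_eqI) (simp_all add: adj_dm_Inl adj_dm_Inr ddb_Inl ddb_Inr Esimps Eb Ebs)
qed

end


theorem proposition3p10:
  fixes b bs :: "('n::finite \<Rightarrow> 'k::field_char_0) \<Rightarrow> ('n \<Rightarrow> 'k) \<Rightarrow> ('n \<Rightarrow> 'k)"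
    and E :: "('n \<Rightarrow> 'k) \<Rightarrow> ('n \<Rightarrow> 'k)"
  assumes "alg_closed TYPE('k)"
    and "ENL_bialgebra b bs E"
  shows "ENL_bialgebra (double_bracket b bs) (dual_double_bracket b bs) (double_map E)"
proof -
  have lb: "lie_algebra b" and ls: "lie_algebra bs"
    and comp: "\<forall>x y. cobracket bs (b x y) =
        (\<lambda>p. (ad_tensor1 b x (cobracket bs y) p + ad_tensor2 b x (cobracket bs y) p)
           - (ad_tensor1 b y (cobracket bs x) p + ad_tensor2 b y (cobracket bs x) p))"
    and eb: "ENL_algebra b E" and es: "ENL_algebra bs (adj E)"
    using assms(2) unfolding ENL_bialgebra_def lie_bialgebra_def by blast+
  have cg: "cgen b bs" using comp compat_iff[OF lie_bil[OF lb] lie_bil[OF ls]] by blast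
  interpret enl b bs E using lb ls cg eb es by (unfold_locales)
  have c2: "cgen (double_bracket b bs) (dual_double_bracket b bs)" by (rule cgen_D)
  have comp2: "\<forall>x y. cobracket (dual_double_bracket b bs) (double_bracket b bs x y) =
        (\<lambda>p. (ad_tensor1 (double_bracket b bs) x (cobracket (dual_double_bracket b bs) y) p
             + ad_tensor2 (double_bracket b bs) x (cobracket (dual_double_bracket b bs) y) p)
           - (ad_tensor1 (double_bracket b bs) y (cobracket (dual_double_bracket b bs) x) p
             + ad_tensor2 (double_bracket b bs) y (cobracket (dual_double_bracket b bs) x) p))"
    using compat_iff[OF D_bil DD_bil] c2 by blast
  show ?thesis
    unfolding ENL_bialgebra_def lie_bialgebra_def
    using D_lie DD_lie comp2 ENL_D ENL_DD by blast
qed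

end
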